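(* Let $n\ge1$ and $\mathbb{P}\in\mathcal{P}_n$. For every $T\in\mathbb{R}_{++}^{2\times n}$ there exists a sequence $(T_k)_{k\ge1}\subset\mathbb{R}_{++}^{2\times n}$, $T_k=(T_{k,ij})$, such that $\mathbf{P}_{\mathbf{z}\sim\mathbb{P}}[z_j=T_{k,1j}/T_{k,2j}]=0$ for all $j\in[n]$ and all $k$, and \[ R_n(\mathbb{P},T)=\lim_{k\to\infty}R_n(\mathbb{P},T_k). \]
   Context: Scheduling on two machines with $n$ tasks. A processing-time matrix is $T\in\mathbb{R}_{++}^{2\times n}$; an allocation is $X\in\{0,1\}^{2\times n}$ with $X_{1j}+X_{2j}=1$; makespan $M(X,T)=\max_{i\in\{1,2\}}\sum_jX_{ij}T_{ij}$; $M^*(T)=\min_XM(X,T)$. $\mathcal{P}_n$ is the set of Borel probability measures on $\mathbb{R}^n$ supported in $\mathbb{R}_{++}^n$. For $\mathbb{P}\in\mathcal{P}_n$, algorithm $\mathcal{A}^{\mathbb{P}}$ draws $\mathbf{z}\sim\mathbb{P}$ and sends task $j$ to machine 1 iff $T_{1j}/T_{2j}<z_j$ (else to machine 2); $M(\mathbb{P},T)$ is the expected makespan of this random allocation and $R_n(\mathbb{P},T)=M(\mathbb{P},T)/M^*(T)$. *)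

theory Defs
  imports "HOL-Probability.Probability"
begin

text \<open>Tasks are indexed by a finite type 'n (so n = CARD('n) \<ge> 1).
  Machines are indexed by the naturals 1 and 2.  A processing-time matrix is
  T :: nat \<Rightarrow> 'n \<Rightarrow> real, only rows 1 and 2 matter.\<close>

definition pos_matrix :: "(nat \<Rightarrow> 'n::finite \<Rightarrow> real) \<Rightarrow> bool" where
  "pos_matrix T \<longleftrightarrow> (\<forall>i\<in>{1,2}. \<forall>j. 0 < T i j)"

definition allocation :: "(nat \<Rightarrow> 'n::finite \<Rightarrow> real) \<Rightarrow> bool" where
  "allocation X \<longleftrightarrow> (\<forall>i\<in>{1,2}. \<forall>j. X i j \<in> {0,1}) \<and> (\<forall>j. X 1 j + X 2 j = 1)"

definition makespan :: "(nat \<Rightarrow> 'n::finite \<Rightarrow> real) \<Rightarrow> (nat \<Rightarrow> 'n \<Rightarrow> real) \<Rightarrow> real" where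
  "makespan X T = max (\<Sum>j\<in>UNIV. X 1 j * T 1 j) (\<Sum>j\<in>UNIV. X 2 j * T 2 j)"

definition opt_makespan :: "(nat \<Rightarrow> 'n::finite \<Rightarrow> real) \<Rightarrow> real" where
  "opt_makespan T = (INF X \<in> {X. allocation X}. makespan X T)"

definition prob_measures :: "(real^'n::finite) measure set" where
  "prob_measures = {P. prob_space P \<and> sets P = sets borel \<and> (AE z in P. \<forall>j. 0 < z $ j)}"

definition alg_alloc :: "real^'n::finite \<Rightarrow> (nat \<Rightarrow> 'n \<Rightarrow> real) \<Rightarrow> (nat \<Rightarrow> 'n \<Rightarrow> real)" where
  "alg_alloc z T = (\<lambda>i j. if i = 1 then (if T 1 j / T 2 j < z $ j then 1 else 0)
                         else if i = 2 then (if T 1 j / T 2 j < z $ j then 0 else 1)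
                         else 0)"

definition exp_makespan :: "(real^'n::finite) measure \<Rightarrow> (nat \<Rightarrow> 'n \<Rightarrow> real) \<Rightarrow> real" where
  "exp_makespan P T = (\<integral>z. makespan (alg_alloc z T) T \<partial>P)"

definition ratio :: "(real^'n::finite) measure \<Rightarrow> (nat \<Rightarrow> 'n \<Rightarrow> real) \<Rightarrow> real" where
  "ratio P T = exp_makespan P T / opt_makespan T"

end

theory Submission
  imports Defs
begin
lemma vn_meas[measurable]: "(\<lambda>z::real^'n::finite. z $ j) \<in> borel_measurable borel"
  by (intro borel_measurable_continuous_onI continuous_intros)
lemma ms_meas: "(\<lambda>z. makespan (alg_alloc z T) T) \<in> borel_measurable (borel :: (real^'n::finite) measure)"
  unfolding makespan_def alg_alloc_def by measurable

lemma atoms_countable: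
  fixes P :: "(real^'n::finite) measure"
  assumes "prob_space P" "sets P = sets borel"
  shows "countable {c. measure P {z. z $ j = c} \<noteq> 0}"
proof -
  let ?D = "distr P borel (\<lambda>z. z $ j)"
  have m: "(\<lambda>z. z $ j) \<in> measurable P borel"
    using measurable_cong_sets[OF assms(2) refl] vn_meas by blast
  have "prob_space ?D" using prob_space.prob_space_distr[OF assms(1) m] .
  then interpret D: finite_measure ?D by (simp add: prob_space_def)
  have sp: "space P = UNIV" using sets_eq_imp_space_eq[OF assms(2)] by simp
  have "measure ?D {c} = measure P {z. z $ j = c}" for c
    by (subst measure_distr[OF m]) (auto simp: sp vimage_def)
  then show ?thesis using D.countable_support by simp
qed

lemma nonatom_exists:
  fixes a b :: real
  assumes "countable A" "a < b"
  shows "\<exists>c. a < c \<and> c < b \<and> c \<notin> A"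
proof -
  have "uncountable {a<..<b}" using uncountable_open_interval assms(2) by blast
  then have "\<not> {a<..<b} \<subseteq> A" using assms(1) countable_subset by blast
  then show ?thesis by auto
qed

lemma alloc_alg: "allocation (alg_alloc z T)"
  unfolding allocation_def alg_alloc_def by auto

lemma makespan_nonneg:
  assumes "pos_matrix T" "allocation X"
  shows "0 \<le> makespan X T"
proof -
  have "0 \<le> X 1 j * T 1 j" for j
  proof -
    have "X 1 j \<in> {0,1}" "0 < T 1 j" using assms unfolding pos_matrix_def allocation_def by auto
    then show ?thesis by auto
  qed
  then have "0 \<le> (\<Sum>j\<in>UNIV. X 1 j * T 1 j)" by (intro sum_nonneg)
  then show ?thesis unfolding makespan_def by simp
qed

lemma makespan_le:
  assumes "pos_matrix T" "allocation X"
  shows "makespan X T \<le> (\<Sum>j\<in>UNIV. T 1 j + T 2 j)"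
proof -
  have a: "X 1 j * T 1 j \<le> T 1 j + T 2 j" "X 2 j * T 2 j \<le> T 1 j + T 2 j" for j
  proof -
    have "T 1 j > 0" "T 2 j > 0" using assms(1) unfolding pos_matrix_def by auto
    moreover have "X 1 j \<in> {0,1}" "X 2 j \<in> {0,1}" using assms(2) unfolding allocation_def by auto
    ultimately show "X 1 j * T 1 j \<le> T 1 j + T 2 j" "X 2 j * T 2 j \<le> T 1 j + T 2 j" by auto
  qed
  show ?thesis unfolding makespan_def by (intro max.boundedI sum_mono a)
qed

lemma makespan_pos:
  assumes "pos_matrix T" "allocation X"
  shows "min (T 1 j0) (T 2 j0) \<le> makespan X T"
proof -
  have nn: "0 \<le> X i j * T i j" if "i \<in> {1,2}" for i j
  proof -
    have "X i j \<in> {0,1}" "0 < T i j" using assms that unfolding pos_matrix_def allocation_def by auto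
    then show ?thesis by auto
  qed
  have s1: "X 1 j0 * T 1 j0 \<le> (\<Sum>j\<in>UNIV. X 1 j * T 1 j)"
    by (rule member_le_sum) (auto intro: nn)
  have s2: "X 2 j0 * T 2 j0 \<le> (\<Sum>j\<in>UNIV. X 2 j * T 2 j)"
    by (rule member_le_sum) (auto intro: nn)
  have "X 1 j0 \<in> {0,1}" "X 1 j0 + X 2 j0 = 1" using assms(2) unfolding allocation_def by auto
  then have "X 1 j0 = 1 \<or> X 2 j0 = 1" by auto
  then show ?thesis
  proof
    assume "X 1 j0 = 1" then show ?thesis using s1 unfolding makespan_def by (simp add: le_max_iff_disj min_le_iff_disj)
  next
    assume "X 2 j0 = 1" then show ?thesis using s2 unfolding makespan_def by (simp add: le_max_iff_disj min_le_iff_disj)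
  qed
qed

definition Dm :: "(nat \<Rightarrow> 'n::finite \<Rightarrow> real) \<Rightarrow> (nat \<Rightarrow> 'n \<Rightarrow> real) \<Rightarrow> real" where
  "Dm T T' = (\<Sum>j\<in>UNIV. \<bar>T 1 j - T' 1 j\<bar> + \<bar>T 2 j - T' 2 j\<bar>)"

lemma makespan_diff:
  assumes "allocation X"
  shows "\<bar>makespan X T - makespan X T'\<bar> \<le> Dm T T'"
proof -
  have d: "\<bar>X i j * T i j - X i j * T' i j\<bar> \<le> \<bar>T i j - T' i j\<bar>" if "i \<in> {1,2}" for i j
  proof -
    have "X i j \<in> {0,1}" using assms that unfolding allocation_def by auto
    then show ?thesis by auto
  qed
  have e: "\<bar>(\<Sum>j\<in>UNIV. X i j * T i j) - (\<Sum>j\<in>UNIV. X i j * T' i j)\<bar> \<le> (\<Sum>j\<in>UNIV. \<bar>T i j - T' i j\<bar>)"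
    if "i \<in> {1,2}" for i
  proof -
    have "\<bar>(\<Sum>j\<in>UNIV. X i j * T i j) - (\<Sum>j\<in>UNIV. X i j * T' i j)\<bar>
       = \<bar>\<Sum>j\<in>UNIV. X i j * T i j - X i j * T' i j\<bar>" by (simp add: sum_subtractf)
    also have "\<dots> \<le> (\<Sum>j\<in>UNIV. \<bar>X i j * T i j - X i j * T' i j\<bar>)" by (rule sum_abs)
    also have "\<dots> \<le> (\<Sum>j\<in>UNIV. \<bar>T i j - T' i j\<bar>)" by (rule sum_mono) (rule d[OF that])
    finally show ?thesis .
  qed
  have "Dm T T' = (\<Sum>j\<in>UNIV. \<bar>T 1 j - T' 1 j\<bar>) + (\<Sum>j\<in>UNIV. \<bar>T 2 j - T' 2 j\<bar>)"
    unfolding Dm_def by (simp add: sum.distrib)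
  moreover have "0 \<le> (\<Sum>j\<in>UNIV. \<bar>T i j - T' i j\<bar>)" for i by (simp add: sum_nonneg)
  moreover have mx: "\<bar>max a b - max c d\<bar> \<le> \<bar>a - c\<bar> + \<bar>b - d\<bar>" for a b c d :: real
    unfolding max_def by (cases "a \<le> b"; cases "c \<le> d") (simp_all add: abs_if)
  ultimately show ?thesis unfolding makespan_def
    using mx[of "\<Sum>j\<in>UNIV. X 1 j * T 1 j" "\<Sum>j\<in>UNIV. X 2 j * T 2 j" "\<Sum>j\<in>UNIV. X 1 j * T' 1 j" "\<Sum>j\<in>UNIV. X 2 j * T' 2 j"]
      e[of 1, OF insertI1] e[of 2, OF insertI2[OF insertI1]] by linarith
qed

lemma alloc_ne: "{X. allocation X} \<noteq> {}"
proof -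
  have "allocation (\<lambda>i j. if i = 1 then 1 else 0)" unfolding allocation_def by auto
  then show ?thesis by blast
qed

lemma opt_le: "pos_matrix T \<Longrightarrow> allocation X \<Longrightarrow> opt_makespan T \<le> makespan X T"
  unfolding opt_makespan_def
  by (rule cINF_lower) (auto intro!: bdd_belowI2[where m=0] makespan_nonneg)

lemma opt_lip1:
  fixes T T' :: "nat \<Rightarrow> 'n::finite \<Rightarrow> real"
  assumes "pos_matrix T" "pos_matrix T'"
  shows "opt_makespan T - Dm T T' \<le> opt_makespan T'"
  unfolding opt_makespan_def[of T']
proof (rule cINF_greatest[OF alloc_ne])
  fix X :: "nat \<Rightarrow> 'n \<Rightarrow> real" assume "X \<in> {X. allocation X}"
  then have "allocation X" by simp
  then show "opt_makespan T - Dm T T' \<le> makespan X T'"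
    using opt_le[OF assms(1) \<open>allocation X\<close>] makespan_diff[OF \<open>allocation X\<close>, of T T'] by linarith
qed

lemma Dm_sym: "Dm T T' = Dm T' T"
  unfolding Dm_def by (simp add: abs_minus_commute)

lemma opt_pos:
  assumes "pos_matrix T"
  shows "0 < opt_makespan T"
proof -
  have "min (T 1 undefined) (T 2 undefined) \<le> opt_makespan T"
    unfolding opt_makespan_def
    by (rule cINF_greatest[OF alloc_ne], rule makespan_pos[OF assms], simp)
  moreover have "0 < min (T 1 undefined) (T 2 undefined)" using assms unfolding pos_matrix_def by simp
  ultimately show ?thesis by linarith
qed

theorem lemma2:
  fixes P :: "(real^'n::finite) measure" and T :: "nat \<Rightarrow> 'n \<Rightarrow> real"
  assumes "P \<in> prob_measures" and "pos_matrix T"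
  shows "\<exists>Ts :: nat \<Rightarrow> nat \<Rightarrow> 'n \<Rightarrow> real.
           (\<forall>k. pos_matrix (Ts k)) \<and>
           (\<forall>k j. measure P {z. z $ j = Ts k 1 j / Ts k 2 j} = 0) \<and>
           (\<lambda>k. ratio P (Ts k)) \<longlonglongrightarrow> ratio P T"
proof -
  have Pp: "prob_space P" "sets P = sets borel" using assms(1) unfolding prob_measures_def by auto
  interpret prob_space P by (rule Pp(1))
  have T2: "0 < T 2 j" "0 < T 1 j" for j using assms(2) unfolding pos_matrix_def by auto
  define r where "r j = T 1 j / T 2 j" for j
  have rpos: "0 < r j" for j using T2[of j] unfolding r_def by simp
  define A where "A j = {c. measure P {z. z $ j = c} \<noteq> 0}" for j
  have cA: "countable (A j)" for j unfolding A_def by (rule atoms_countable[OF Pp])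
  define c where "c k j = (SOME x. r j < x \<and> x < r j + 1 / real (Suc k) \<and> x \<notin> A j)" for k j
  have c: "r j < c k j \<and> c k j < r j + 1 / real (Suc k) \<and> c k j \<notin> A j" for k j
  proof -
    have "\<exists>x. r j < x \<and> x < r j + 1 / real (Suc k) \<and> x \<notin> A j"
      by (rule nonatom_exists[OF cA]) simp
    then show ?thesis unfolding c_def by (rule someI_ex)
  qed
  have clim: "(\<lambda>k. c k j) \<longlonglongrightarrow> r j" for j
  proof (rule tendsto_sandwich[of "\<lambda>k. r j" _ _ "\<lambda>k. r j + 1 / real (Suc k)"])
    show "\<forall>\<^sub>F k in sequentially. r j \<le> c k j" using c by (simp add: less_imp_le)
    show "\<forall>\<^sub>F k in sequentially. c k j \<le> r j + 1 / real (Suc k)" using c by (simp add: less_imp_le)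
    show "(\<lambda>k. r j) \<longlonglongrightarrow> r j" by simp
    have "(\<lambda>k. 1 / real (Suc k)) \<longlonglongrightarrow> 0" using LIMSEQ_Suc[OF lim_1_over_n] by simp
    then show "(\<lambda>k. r j + 1 / real (Suc k)) \<longlonglongrightarrow> r j" using tendsto_add[of "\<lambda>k. r j" "r j"] by fastforce
  qed
  define Ts where "Ts k i j = (if i = 1 then T 2 j * c k j else T i j)" for k and i :: nat and j
  have rat: "Ts k 1 j / Ts k 2 j = c k j" for k j using T2[of j] unfolding Ts_def by simp
  have Tspos: "pos_matrix (Ts k)" for k
  proof -
    have "0 < c k j" for j using rpos[of j] c[of j k] by linarith
    then show ?thesis unfolding pos_matrix_def Ts_def using T2 by auto
  qed
  have meas0: "measure P {z. z $ j = Ts k 1 j / Ts k 2 j} = 0" for k j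
    using c[of j k] unfolding rat A_def by simp
  have Tslim: "(\<lambda>k. Ts k i j) \<longlonglongrightarrow> T i j" for i j
  proof (cases "i = 1")
    case True
    have "(\<lambda>k. T 2 j * c k j) \<longlonglongrightarrow> T 2 j * r j" by (intro tendsto_intros clim)
    moreover have "T 2 j * r j = T 1 j" using T2[of j] unfolding r_def by simp
    ultimately show ?thesis using True unfolding Ts_def by simp
  next
    case False then show ?thesis unfolding Ts_def by simp
  qed
  have "(\<lambda>k. Dm (Ts k) T) \<longlonglongrightarrow> (\<Sum>j\<in>UNIV. \<bar>T 1 j - T 1 j\<bar> + \<bar>T 2 j - T 2 j\<bar>)"
    unfolding Dm_def by (intro tendsto_intros Tslim)
  then have Dlim: "(\<lambda>k. Dm (Ts k) T) \<longlonglongrightarrow> 0" by simp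
  have optlim: "(\<lambda>k. opt_makespan (Ts k)) \<longlonglongrightarrow> opt_makespan T"
  proof (rule tendsto_sandwich[of "\<lambda>k. opt_makespan T - Dm (Ts k) T" _ _ "\<lambda>k. opt_makespan T + Dm (Ts k) T"])
    show "\<forall>\<^sub>F k in sequentially. opt_makespan T - Dm (Ts k) T \<le> opt_makespan (Ts k)"
      using opt_lip1[OF assms(2) Tspos] Dm_sym by (simp add: Dm_sym)
    show "\<forall>\<^sub>F k in sequentially. opt_makespan (Ts k) \<le> opt_makespan T + Dm (Ts k) T"
      using opt_lip1[OF Tspos assms(2)] by (simp add: algebra_simps)
    show "(\<lambda>k. opt_makespan T - Dm (Ts k) T) \<longlonglongrightarrow> opt_makespan T"
      using tendsto_diff[OF tendsto_const Dlim, of "opt_makespan T"] by simp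
    show "(\<lambda>k. opt_makespan T + Dm (Ts k) T) \<longlonglongrightarrow> opt_makespan T"
      using tendsto_add[OF tendsto_const Dlim, of "opt_makespan T"] by simp
  qed
  have msP: "(\<lambda>z. makespan (alg_alloc z T') T') \<in> borel_measurable P" for T' :: "nat \<Rightarrow> 'n \<Rightarrow> real"
    using measurable_cong_sets[OF Pp(2) refl] ms_meas by blast
  have Tsle: "Ts k 1 j \<le> T 1 j + T 2 j" for k j
  proof -
    have "1 / real (Suc k) \<le> 1" by simp
    then have "c k j \<le> r j + 1" using c[of j k] by linarith
    then have "T 2 j * c k j \<le> T 2 j * (r j + 1)" using T2[of j] by (intro mult_left_mono) auto
    also have "\<dots> = T 1 j + T 2 j" using T2[of j] unfolding r_def by (simp add: algebra_simps)
    finally show ?thesis unfolding Ts_def by simp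
  qed
  have explim: "(\<lambda>k. exp_makespan P (Ts k)) \<longlonglongrightarrow> exp_makespan P T"
    unfolding exp_makespan_def
  proof (rule integral_dominated_convergence[where w = "\<lambda>z. \<Sum>j\<in>UNIV. T 1 j + T 1 j + T 2 j + T 2 j"])
    show "(\<lambda>z. makespan (alg_alloc z T) T) \<in> borel_measurable P" by (rule msP)
    show "(\<lambda>z. makespan (alg_alloc z (Ts k)) (Ts k)) \<in> borel_measurable P" for k by (rule msP)
    show "integrable P (\<lambda>z. \<Sum>j\<in>UNIV. T 1 j + T 1 j + T 2 j + T 2 j)" by simp
    show "AE z in P. norm (makespan (alg_alloc z (Ts k)) (Ts k)) \<le> (\<Sum>j\<in>UNIV. T 1 j + T 1 j + T 2 j + T 2 j)" for k
    proof (rule AE_I2)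
      fix z
      have "0 \<le> makespan (alg_alloc z (Ts k)) (Ts k)" by (rule makespan_nonneg[OF Tspos alloc_alg])
      moreover have "makespan (alg_alloc z (Ts k)) (Ts k) \<le> (\<Sum>j\<in>UNIV. Ts k 1 j + Ts k 2 j)"
        by (rule makespan_le[OF Tspos alloc_alg])
      moreover have "(\<Sum>j\<in>UNIV. Ts k 1 j + Ts k 2 j) \<le> (\<Sum>j\<in>UNIV. T 1 j + T 1 j + T 2 j + T 2 j)"
      proof (rule sum_mono)
        fix j
        show "Ts k 1 j + Ts k 2 j \<le> T 1 j + T 1 j + T 2 j + T 2 j"
          using Tsle[of k j] T2[of j] unfolding Ts_def[of k 2] by simp
      qed
      ultimately show "norm (makespan (alg_alloc z (Ts k)) (Ts k)) \<le> (\<Sum>j\<in>UNIV. T 1 j + T 1 j + T 2 j + T 2 j)"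
        by simp
    qed
    show "AE z in P. (\<lambda>k. makespan (alg_alloc z (Ts k)) (Ts k)) \<longlonglongrightarrow> makespan (alg_alloc z T) T"
    proof (rule AE_I2)
      fix z :: "real^'n"
      have ev: "\<forall>\<^sub>F k in sequentially. \<forall>j. (c k j < z $ j) = (r j < z $ j)"
      proof (rule eventually_all_finite)
        fix j
        show "\<forall>\<^sub>F k in sequentially. (c k j < z $ j) = (r j < z $ j)"
        proof (cases "r j < z $ j")
          case True
          show ?thesis using order_tendstoD(2)[OF clim True] by (rule eventually_mono) (simp add: True)
        next
          case False
          then show ?thesis using c[of j] by (auto intro!: always_eventually) (meson False less_trans not_less)
        qed
      qed
      have ev2: "\<forall>\<^sub>F k in sequentially. makespan (alg_alloc z T) (Ts k) = makespan (alg_alloc z (Ts k)) (Ts k)"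
        using ev
      proof (rule eventually_mono)
        fix k assume h: "\<forall>j. (c k j < z $ j) = (r j < z $ j)"
        have "alg_alloc z (Ts k) = alg_alloc z T"
          unfolding alg_alloc_def rat using h unfolding r_def by (auto simp: fun_eq_iff)
        then show "makespan (alg_alloc z T) (Ts k) = makespan (alg_alloc z (Ts k)) (Ts k)" by simp
      qed
      have "(\<lambda>k. makespan (alg_alloc z T) (Ts k)) \<longlonglongrightarrow> makespan (alg_alloc z T) T"
        unfolding makespan_def by (intro tendsto_intros Tslim)
      then show "(\<lambda>k. makespan (alg_alloc z (Ts k)) (Ts k)) \<longlonglongrightarrow> makespan (alg_alloc z T) T"
        using tendsto_cong[OF ev2] by simp
    qed
  qed
  have "(\<lambda>k. ratio P (Ts k)) \<longlonglongrightarrow> ratio P T"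
    unfolding ratio_def by (rule tendsto_divide[OF explim optlim]) (use opt_pos[OF assms(2)] in simp)
  then show ?thesis using Tspos meas0 by blast
qed

end
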